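(* Let $r$ be a prime power, $q=r^2$, and let $0\le k\le n\le q$ be integers. Then for every integer $i$ with $0\le i\le n-k$ there exists a Hermitian self-orthogonal matrix-product code over $\mathbb{F}_q$ with parameters $[2n,n-i,d]_q$ where $d\ge\min\{2(n-k+1),k+i+1\}$.
   Context: For $a\in\mathbb{F}_q$, $\overline{a}:=a^r$. The Hermitian inner product on $\mathbb{F}_q^n$ is $\langle u,v\rangle_H=\sum_i u_i\overline{v_i}$; a linear code $C$ is Hermitian self-orthogonal if $C\subseteq C^{\perp_H}$. A code with parameters $[n,k,d]_q$ has length $n$, dimension $k$, minimum Hamming weight $d$. If $C_1,\dots,C_s$ are linear codes of length $m$ with generator matrices $G_i$ and $A=[a_{ij}]\in M_{s,l}(\mathbb{F}_q)$, the matrix-product code $[C_1,\dots,C_s]\cdot A$ is the linear code of length $ml$ generated by the block matrix whose $(i,j)$ block is $a_{ij}G_i$. *)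

theory Defs
  imports Main "HOL-Computational_Algebra.Primes" "HOL.Vector_Spaces" "HOL-Library.Function_Algebras"
begin

text \<open>Vectors of length n over a field are modelled as functions nat => 'a
  that vanish from index n onward.  Scalar multiplication is pointwise.\<close>

definition fscale :: "'a::field \<Rightarrow> (nat \<Rightarrow> 'a) \<Rightarrow> (nat \<Rightarrow> 'a)" where
  "fscale c v = (\<lambda>i. c * v i)"

interpretation fvs: vector_space "fscale :: 'a::field \<Rightarrow> (nat \<Rightarrow> 'a) \<Rightarrow> (nat \<Rightarrow> 'a)"
  by unfold_locales (auto simp: fscale_def fun_eq_iff algebra_simps)

definition vecs :: "nat \<Rightarrow> (nat \<Rightarrow> 'a::zero) set" where
  "vecs n = {v. \<forall>i\<ge>n. v i = 0}"

definition linear_code :: "nat \<Rightarrow> (nat \<Rightarrow> 'a::field) set \<Rightarrow> bool" where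
  "linear_code n C \<longleftrightarrow> C \<subseteq> vecs n \<and> fvs.subspace C"

definition code_dim :: "(nat \<Rightarrow> 'a::field) set \<Rightarrow> nat" where
  "code_dim C = fvs.dim C"

definition hamming_weight :: "nat \<Rightarrow> (nat \<Rightarrow> 'a::zero) \<Rightarrow> nat" where
  "hamming_weight n v = card {i. i < n \<and> v i \<noteq> 0}"

text \<open>Hermitian inner product on 'a^n with conjugation a |-> a^r.\<close>
definition herm_inner :: "nat \<Rightarrow> nat \<Rightarrow> (nat \<Rightarrow> 'a::field) \<Rightarrow> (nat \<Rightarrow> 'a) \<Rightarrow> 'a" where
  "herm_inner r n u v = (\<Sum>i<n. u i * (v i) ^ r)"

definition herm_self_orth :: "nat \<Rightarrow> nat \<Rightarrow> (nat \<Rightarrow> 'a::field) set \<Rightarrow> bool" where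
  "herm_self_orth r n C \<longleftrightarrow> (\<forall>u\<in>C. \<forall>v\<in>C. herm_inner r n u v = 0)"

text \<open>Matrix-product code [C_0,...,C_{s-1}] * A, with A an s x l matrix (A i j),
  codes of length m.  This is the row space of the block matrix with blocks A i j * G_i.\<close>
definition mp_code :: "nat \<Rightarrow> nat \<Rightarrow> nat \<Rightarrow> (nat \<Rightarrow> (nat \<Rightarrow> 'a::field) set)
     \<Rightarrow> (nat \<Rightarrow> nat \<Rightarrow> 'a) \<Rightarrow> (nat \<Rightarrow> 'a) set" where
  "mp_code s l m C A =
     {w. \<exists>c. (\<forall>i<s. c i \<in> C i) \<and>
          w = (\<lambda>x. if x < l * m then (\<Sum>i<s. A i (x div m) * c i (x mod m)) else 0)}"

end

theory Submission
  imports Defs "HOL-Number_Theory.Residues" "HOL-Computational_Algebra.Polynomial"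
begin

lemma fpow_card:
  fixes x :: "'a :: {finite,field}"
  shows "x ^ card (UNIV::'a set) = x"
proof (cases "x = 0")
  case False
  have "x * (\<Prod>y\<in>UNIV-{0}. x * y) = x * x ^ (card (UNIV :: 'a set) - 1) * \<Prod>(UNIV-{0})"
    by (simp add: prod.distrib mult_ac)
  also have "x * x ^ (card (UNIV :: 'a set) - 1) = x ^ Suc (card (UNIV :: 'a set) - 1)"
    by (subst power_Suc) auto
  also have "Suc (card (UNIV :: 'a set) - 1) = card (UNIV :: 'a set)"
    using finite_UNIV_card_ge_0[where ?'a = 'a] by simp
  also have "(\<Prod>y\<in>UNIV-{0}. x * y) = (\<Prod>y\<in>UNIV-{0}. y)"
    by (rule prod.reindex_bij_witness[of _ "\<lambda>y. y / x" "\<lambda>y. x * y"]) (use False in auto)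
  finally show ?thesis
    by simp
qed (use finite_UNIV_card_ge_0[where ?'a = 'a] in auto)

lemma roots_pow_bound:
  fixes c :: "'a :: {finite,field}"
  assumes "j \<ge> 1"
  shows "card {x. x ^ j = c} \<le> j"
proof -
  let ?p = "monom (1::'a) j - [:c:]"
  have c: "coeff ?p j = 1" using assms by (cases j) (auto simp: coeff_monom)
  hence nz: "?p \<noteq> 0" by (metis coeff_0 zero_neq_one)
  have dg: "degree ?p \<le> j"
    by (simp add: degree_diff_le degree_monom_eq)
  have "{x. x ^ j = c} = {x. poly ?p x = 0}" by (auto simp: poly_monom)
  also have "card \<dots> \<le> degree ?p" by (rule card_poly_roots_bound[OF nz])
  finally show ?thesis using dg by simp
qed

lemma char_eq_p:
  assumes "prime p" "card (UNIV::'a::{finite,field} set) = p ^ e" "e \<ge> 1"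
  shows "CHAR('a) = p"
proof -
  have pos: "CHAR('a) > 0" by (simp add: finite_imp_CHAR_pos)
  have pr: "prime CHAR('a)" using prime_CHAR_semidom[OF pos] .
  have "CHAR('a) dvd p ^ e" using CHAR_dvd_CARD[where 'a='a] assms by simp
  hence "CHAR('a) dvd p" using pr prime_dvd_power by blast
  thus ?thesis using pr assms(1) primes_dvd_imp_eq by blast
qed

lemma power_sum_zero:
  assumes "j + 1 < card (UNIV::'a::{finite,field} set)"
  shows "(\<Sum>x\<in>(UNIV::'a set). x ^ j) = 0"
proof (cases "j = 0")
  case True
  have "(\<Sum>x\<in>(UNIV::'a set). x ^ j) = of_nat (card (UNIV::'a set))" using True by simp
  also have "\<dots> = 0" using CHAR_dvd_CARD[where 'a='a] of_nat_eq_0_iff_char_dvd by blast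
  finally show ?thesis .
next
  case False
  have "card {x::'a. x ^ j = 1} \<le> j" by (rule roots_pow_bound) (use False in auto)
  hence "card ({x::'a. x ^ j = 1} \<union> {0}) \<le> j + 1"
    using card_Un_le[of "{x::'a. x ^ j = 1}" "{0}"] by simp
  hence "card ({x::'a. x ^ j = 1} \<union> {0}) < card (UNIV::'a set)" using assms by linarith
  moreover have "UNIV \<subseteq> {x::'a. x ^ j = 1} \<union> {0} \<Longrightarrow> card (UNIV::'a set) \<le> card ({x::'a. x ^ j = 1} \<union> {0})"
    by (rule card_mono) simp_all
  ultimately obtain c :: 'a where c: "c \<notin> {x::'a. x ^ j = 1} \<union> {0}"
    by force
  hence c0: "c \<noteq> 0" and cj: "c ^ j \<noteq> 1" by auto
  have "(\<Sum>x\<in>(UNIV::'a set). x ^ j) = (\<Sum>x\<in>(UNIV::'a set). (c * x) ^ j)"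
    by (rule sum.reindex_bij_witness[of _ "\<lambda>y. c * y" "\<lambda>y. y / c"]) (use c0 in auto)
  also have "\<dots> = c ^ j * (\<Sum>x\<in>(UNIV::'a set). x ^ j)"
    by (simp add: power_mult_distrib sum_distrib_left)
  finally have "(1 - c ^ j) * (\<Sum>x\<in>(UNIV::'a set). x ^ j) = 0" by (simp add: algebra_simps)
  thus ?thesis using cj by simp
qed

lemma pow_card_minus1:
  fixes x :: "'a::{finite,field}"
  assumes "x \<noteq> 0"
  shows "x ^ (card (UNIV::'a set) - 1) = 1"
proof -
  have c: "card (UNIV::'a set) \<ge> 1" using finite_UNIV_card_ge_0[where 'a='a] by simp
  have "x * x ^ (card (UNIV::'a set) - 1) = x ^ Suc (card (UNIV::'a set) - 1)" by simp
  also have "\<dots> = x" using c fpow_card[of x] by simp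
  finally show ?thesis using assms by simp
qed

lemma norm_facts:
  fixes r :: nat
  assumes card: "card (UNIV::'a::{finite,field} set) = r ^ 2" and r2: "r \<ge> 2"
  shows "(\<forall>y::'a. y ^ (r - 1) = 1 \<longrightarrow> (\<exists>x. x ^ (r + 1) = y)) \<and>
         (\<exists>z::'a. z \<noteq> 1 \<and> z ^ (r + 1) = 1)"
proof -
  define N where "N = (\<lambda>x::'a. x ^ (r + 1))"
  define Fs where "Fs = (UNIV::'a set) - {0}"
  define S where "S = {y::'a. y ^ (r - 1) = 1}"
  have cardFs: "card Fs = r ^ 2 - 1" unfolding Fs_def using card by (simp add: card_Diff_singleton)
  have img: "N ` Fs \<subseteq> S"
  proof
    fix y assume "y \<in> N ` Fs"
    then obtain x where x: "x \<noteq> 0" "y = x ^ (r + 1)" unfolding Fs_def N_def by auto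
    have e: "(r + 1) * (r - 1) = card (UNIV::'a set) - 1" using r2 card
      by (simp add: power2_eq_square algebra_simps diff_mult_distrib2)
    have "y ^ (r - 1) = x ^ ((r + 1) * (r - 1))" using x by (simp only: power_mult)
    hence "y ^ (r - 1) = x ^ (card (UNIV::'a set) - 1)" using e by simp
    thus "y \<in> S" using pow_card_minus1[OF x(1)] S_def by simp
  qed
  have cardS: "card S \<le> r - 1" unfolding S_def by (rule roots_pow_bound) (use r2 in auto)
  have "Fs \<subseteq> (\<Union>y\<in>N ` Fs. {x. x ^ (r + 1) = y})" unfolding N_def by auto
  hence "card Fs \<le> card (\<Union>y\<in>N ` Fs. {x. x ^ (r + 1) = y})" by (intro card_mono) simp_all
  also have "\<dots> \<le> (\<Sum>y\<in>N ` Fs. card {x. x ^ (r + 1) = y})" by (rule card_UN_le) simp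
  also have "\<dots> \<le> (\<Sum>y\<in>N ` Fs. r + 1)" by (intro sum_mono roots_pow_bound) simp
  also have "\<dots> = card (N ` Fs) * (r + 1)" by simp
  finally have A: "(r - 1) * (r + 1) \<le> card (N ` Fs) * (r + 1)" using cardFs r2
    by (simp add: power2_eq_square algebra_simps diff_mult_distrib2)
  hence B: "r - 1 \<le> card (N ` Fs)" using mult_le_cancel2[of "r - 1" "r + 1" "card (N ` Fs)"] by simp
  have fS: "finite S" by simp
  have eq: "N ` Fs = S"
    using card_seteq[OF fS img] B cardS by linarith
  have part1: "\<forall>y::'a. y ^ (r - 1) = 1 \<longrightarrow> (\<exists>x. x ^ (r + 1) = y)"
  proof (intro allI impI)
    fix y :: 'a assume "y ^ (r - 1) = 1"
    hence "y \<in> N ` Fs" using eq S_def by simp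
    thus "\<exists>x. x ^ (r + 1) = y" unfolding N_def by blast
  qed
  have "\<not> inj_on N Fs"
  proof
    assume "inj_on N Fs"
    hence "card (N ` Fs) = r ^ 2 - 1" using cardFs card_image by metis
    moreover have "r ^ 2 - 1 > r - 1"
    proof -
      have "r * 1 < r * r" using r2 by (intro mult_strict_left_mono) auto
      thus ?thesis using r2 unfolding power2_eq_square by linarith
    qed
    ultimately show False using img cardS card_mono[OF fS img] by linarith
  qed
  then obtain x y where xy: "x \<in> Fs" "y \<in> Fs" "x \<noteq> y" "N x = N y" unfolding inj_on_def by blast
  define z where "z = x / y"
  have "z \<noteq> 1" using xy unfolding z_def Fs_def by auto
  moreover have "z ^ (r + 1) = 1" using xy unfolding z_def Fs_def N_def by (simp add: power_divide)
  ultimately show ?thesis using part1 by blast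
qed

definition blk :: "nat \<Rightarrow> (nat \<Rightarrow> 'a::zero) \<Rightarrow> (nat \<Rightarrow> 'a) \<Rightarrow> nat \<Rightarrow> 'a" where
  "blk n u v = (\<lambda>y. if y < n then u y else if y < 2 * n then v (y - n) else 0)"

lemma sum_fun_app:
  fixes f :: "'b \<Rightarrow> nat \<Rightarrow> 'a::comm_monoid_add"
  shows "(\<Sum>j\<in>A. f j) x = (\<Sum>j\<in>A. f j x)"
  by (induction A rule: infinite_finite_induct) auto

lemma sum_2n:
  fixes g :: "nat \<Rightarrow> 'a::comm_monoid_add"
  shows "(\<Sum>y<2 * n. g y) = (\<Sum>x<n. g x) + (\<Sum>x<n. g (x + n))"
proof -
  have "(\<Sum>y<2 * n. g y) = (\<Sum>y\<in>{0..<n}. g y) + (\<Sum>y\<in>{n..<n+n}. g y)"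
    by (simp add: sum.atLeastLessThan_concat mult_2 lessThan_atLeast0)
  also have "(\<Sum>y\<in>{n..<n+n}. g y) = (\<Sum>x\<in>{0..<n}. g (x + n))"
    using sum.shift_bounds_nat_ivl[of g 0 n n] by simp
  finally show ?thesis by (simp add: lessThan_atLeast0)
qed

lemma weight_blk:
  fixes u v :: "nat \<Rightarrow> 'a::zero"
  shows "hamming_weight (2 * n) (blk n u v) = card {x. x < n \<and> u x \<noteq> 0} + card {x. x < n \<and> v x \<noteq> 0}"
proof -
  have e: "{y. y < 2 * n \<and> blk n u v y \<noteq> 0} = {x. x < n \<and> u x \<noteq> 0} \<union> (\<lambda>x. x + n) ` {x. x < n \<and> v x \<noteq> 0}"
  proof (intro equalityI subsetI)
    fix y assume y: "y \<in> {y. y < 2 * n \<and> blk n u v y \<noteq> 0}"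
    show "y \<in> {x. x < n \<and> u x \<noteq> 0} \<union> (\<lambda>x. x + n) ` {x. x < n \<and> v x \<noteq> 0}"
    proof (cases "y < n")
      case True thus ?thesis using y by (simp add: blk_def)
    next
      case False
      hence "y = (y - n) + n" "y - n < n" using y by auto
      moreover have "v (y - n) \<noteq> 0" using y False by (simp add: blk_def split: if_splits)
      ultimately show ?thesis by blast
    qed
  next
    fix y assume "y \<in> {x. x < n \<and> u x \<noteq> 0} \<union> (\<lambda>x. x + n) ` {x. x < n \<and> v x \<noteq> 0}"
    thus "y \<in> {y. y < 2 * n \<and> blk n u v y \<noteq> 0}" by (auto simp: blk_def)
  qed
  have "card ({x. x < n \<and> u x \<noteq> 0} \<union> (\<lambda>x. x + n) ` {x. x < n \<and> v x \<noteq> 0})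
      = card {x. x < n \<and> u x \<noteq> 0} + card ((\<lambda>x. x + n) ` {x. x < n \<and> v x \<noteq> 0})"
    by (rule card_Un_disjoint) auto
  also have "card ((\<lambda>x. x + n) ` {x. x < n \<and> v x \<noteq> 0}) = card {x. x < n \<and> v x \<noteq> 0}"
    by (rule card_image) (auto simp: inj_on_def)
  finally show ?thesis unfolding hamming_weight_def e .
qed

lemma herm_blk:
  fixes u v u' v' :: "nat \<Rightarrow> 'a::field"
  shows "herm_inner r (2 * n) (blk n u v) (blk n u' v') = (\<Sum>x<n. u x * u' x ^ r) + (\<Sum>x<n. v x * v' x ^ r)"
  unfolding herm_inner_def sum_2n by (simp add: blk_def)

lemma blk_vecs: "blk n u v \<in> vecs (2 * n)"
  unfolding vecs_def blk_def by auto

lemma blk_add: "blk n u v + blk n u' v' = blk n (u + u') (v + v' :: nat \<Rightarrow> 'a::monoid_add)"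
  unfolding blk_def by (auto simp: fun_eq_iff)

lemma blk_scale: "fscale c (blk n u v) = blk n (fscale c u) (fscale c v)"
  unfolding blk_def fscale_def by (auto simp: fun_eq_iff)

lemma blk_zero_iff: "blk n u v = 0 \<Longrightarrow> x < n \<Longrightarrow> u x = 0 \<and> v x = 0"
  unfolding blk_def fun_eq_iff by (metis zero_fun_def add_less_cancel_right diff_add_inverse2 mult_2 not_add_less2)

lemma weight_zero: "hamming_weight m (0::nat\<Rightarrow>'a::zero) = 0"
  unfolding hamming_weight_def by simp

lemma sum_poly_zero:
  fixes h :: "'a::{finite,field} poly"
  assumes "degree h + 2 \<le> card (UNIV::'a set)"
  shows "(\<Sum>x\<in>UNIV. poly h x) = 0"
proof -
  have "(\<Sum>x\<in>UNIV. poly h x) = (\<Sum>x\<in>UNIV. \<Sum>i\<le>degree h. coeff h i * x ^ i)"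
    by (simp add: poly_altdef)
  also have "\<dots> = (\<Sum>i\<le>degree h. coeff h i * (\<Sum>x\<in>UNIV. x ^ i))"
    by (subst sum.swap) (simp add: sum_distrib_left)
  also have "\<dots> = 0"
    by (intro sum.neutral ballI) (use assms in \<open>auto intro!: power_sum_zero\<close>)
  finally show ?thesis .
qed

lemma degree_lt_of_coeff:
  fixes f :: "'a::zero poly"
  assumes "\<forall>j\<ge>k. coeff f j = 0" "f \<noteq> 0"
  shows "k \<ge> 1 \<and> degree f \<le> k - 1"
proof -
  have "k \<ge> 1"
  proof (rule ccontr)
    assume "\<not> k \<ge> 1" hence "k = 0" by simp
    hence "f = 0" using assms(1) by (intro poly_eqI) simp
    thus False using assms(2) by simp
  qed
  moreover have "degree f \<le> k - 1" using assms(1) \<open>k \<ge> 1\<close> by (intro degree_le) auto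
  ultimately show ?thesis by simp
qed

locale cwsetup =
  fixes r n k m2 :: nat and P :: "nat \<Rightarrow> 'a::{finite,field}" and Z :: "'a poly" and a b :: 'a
  assumes injP: "inj_on P {..<n}"
  and Znz: "\<forall>x<n. poly Z (P x) \<noteq> 0"
  and Zz: "\<forall>y. y \<notin> P ` {..<n} \<longrightarrow> poly Z y = 0"
  and degZ: "degree Z + n \<le> card (UNIV::'a set)"
  and km: "k + m2 \<le> n"
  and radd: "\<forall>x y::'a. (x + y) ^ r = x ^ r + y ^ r"
  and rr: "\<forall>x::'a. (x ^ r) ^ r = x"
  and r1: "r \<ge> 1"
  and an: "a ^ (r + 1) = -1" and bn: "b ^ (r + 1) = -1" and ab: "a \<noteq> b"
begin

definition cj :: "'a \<Rightarrow> 'a" where "cj x = x ^ r"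
definition Uf where "Uf \<beta> x = (\<Sum>j<k. \<beta> j * P x ^ j)"
definition Vf where "Vf \<beta> x = (\<Sum>j<m2. \<beta> (k + j) * cj (P x ^ j * poly Z (P x)))"
definition Phi where "Phi \<beta> = blk n (\<lambda>x. Uf \<beta> x + Vf \<beta> x) (\<lambda>x. a * Uf \<beta> x + b * Vf \<beta> x)"
definition fp where "fp \<beta> = (\<Sum>j<k. monom (\<beta> j) j)"
definition gp where "gp \<beta> = (\<Sum>j<m2. monom (cj (\<beta> (k + j))) j)"

lemma cj_add: "cj (x + y) = cj x + cj y" using radd cj_def by simp
lemma cj_mult: "cj (x * y) = cj x * cj y" unfolding cj_def by (simp add: power_mult_distrib)
lemma cj_cj: "cj (cj x) = x" unfolding cj_def using rr by simp
lemma cj_0: "cj 0 = 0" unfolding cj_def using r1 by simp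
lemma cj_eq0: "cj x = 0 \<longleftrightarrow> x = 0" unfolding cj_def using r1 by simp
lemma cj_sum: "cj (\<Sum>j\<in>A. f j) = (\<Sum>j\<in>A. cj (f j))"
  by (induction A rule: infinite_finite_induct) (auto simp: cj_0 cj_add)

lemma Uf_poly: "Uf \<beta> x = poly (fp \<beta>) (P x)"
  unfolding Uf_def fp_def by (simp add: poly_sum poly_monom)

lemma Vf_poly: "Vf \<beta> x = cj (poly (gp \<beta>) (P x) * poly Z (P x))"
  unfolding Vf_def gp_def by (simp add: poly_sum poly_monom sum_distrib_right cj_sum cj_mult cj_cj mult.assoc)

lemma coeff_fp: "coeff (fp \<beta>) j = (if j < k then \<beta> j else 0)"
  unfolding fp_def by (simp add: coeff_sum coeff_monom)

lemma coeff_gp: "coeff (gp \<beta>) j = (if j < m2 then cj (\<beta> (k + j)) else 0)"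
  unfolding gp_def by (simp add: coeff_sum coeff_monom)

lemma sum_P_zero:
  assumes "degree h + 2 + degree Z \<le> card (UNIV::'a set)"
  shows "(\<Sum>x<n. poly h (P x) * poly Z (P x)) = 0"
proof -
  have "(\<Sum>x<n. poly h (P x) * poly Z (P x)) = (\<Sum>x<n. poly (h * Z) (P x))" by simp
  also have "\<dots> = (\<Sum>y\<in>P ` {..<n}. poly (h * Z) y)"
    by (rule sum.reindex[OF injP, symmetric, unfolded comp_def])
  also have "\<dots> = (\<Sum>y\<in>UNIV. poly (h * Z) y)"
    by (rule sum.mono_neutral_left) (use Zz in auto)
  also have "\<dots> = 0"
    by (rule sum_poly_zero) (use assms degree_mult_le[of h Z] in linarith)
  finally show ?thesis .
qed

lemma deg_fg: "fp \<beta> * gp \<beta>' = 0 \<or> degree (fp \<beta> * gp \<beta>') + 2 + degree Z \<le> card (UNIV::'a set)"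
proof (cases "fp \<beta> = 0 \<or> gp \<beta>' = 0")
  case False
  have "k \<ge> 1 \<and> degree (fp \<beta>) \<le> k - 1"
    by (rule degree_lt_of_coeff) (use False in \<open>auto simp: coeff_fp\<close>)
  moreover have "m2 \<ge> 1 \<and> degree (gp \<beta>') \<le> m2 - 1"
    by (rule degree_lt_of_coeff) (use False in \<open>auto simp: coeff_gp\<close>)
  ultimately show ?thesis using degree_mult_le[of "fp \<beta>" "gp \<beta>'"] km degZ by linarith
qed auto

lemma cross1: "(\<Sum>x<n. Uf \<beta> x * (Vf \<beta>' x) ^ r) = 0"
proof -
  have "(\<Sum>x<n. Uf \<beta> x * (Vf \<beta>' x) ^ r) = (\<Sum>x<n. poly (fp \<beta> * gp \<beta>') (P x) * poly Z (P x))"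
    by (simp add: Uf_poly Vf_poly cj_cj flip: cj_def mult.assoc)
  also have "\<dots> = 0"
  proof (cases "fp \<beta> * gp \<beta>' = 0")
    case False
    hence d: "degree (fp \<beta> * gp \<beta>') + 2 + degree Z \<le> card (UNIV::'a set)" using deg_fg[of \<beta> \<beta>'] by auto
    show ?thesis by (rule sum_P_zero[OF d])
  qed (auto simp del: poly_mult)
  finally show ?thesis .
qed

lemma cross2: "(\<Sum>x<n. Vf \<beta> x * (Uf \<beta>' x) ^ r) = 0"
proof -
  have "(\<Sum>x<n. Vf \<beta> x * (Uf \<beta>' x) ^ r) = cj (\<Sum>x<n. poly (fp \<beta>' * gp \<beta>) (P x) * poly Z (P x))"
    by (simp add: Uf_poly Vf_poly cj_sum cj_mult flip: cj_def) (simp add: mult_ac)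
  also have "\<dots> = 0"
  proof (cases "fp \<beta>' * gp \<beta> = 0")
    case False
    hence d: "degree (fp \<beta>' * gp \<beta>) + 2 + degree Z \<le> card (UNIV::'a set)" using deg_fg[of \<beta>' \<beta>] by auto
    show ?thesis using sum_P_zero[OF d] cj_0 by simp
  qed (auto simp del: poly_mult simp add: cj_0)
  finally show ?thesis .
qed

lemma herm_Phi: "herm_inner r (2 * n) (Phi \<beta>) (Phi \<beta>') = 0"
proof -
  have aa: "a * a ^ r = -1" using an by simp
  have bb: "b * b ^ r = -1" using bn by simp
  have pt: "(U + V) * (U' + V') ^ r + (a * U + b * V) * (a * U' + b * V') ^ r
      = (1 + a * b ^ r) * (U * V' ^ r) + (1 + b * a ^ r) * (V * U' ^ r)" for U V U' V' :: 'a
  proof -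
    have "(U + V) * (U' + V') ^ r + (a * U + b * V) * (a * U' + b * V') ^ r
       = (U + V) * (U' ^ r + V' ^ r) + (a * U + b * V) * (a ^ r * U' ^ r + b ^ r * V' ^ r)"
      using radd by (simp add: power_mult_distrib)
    also have "\<dots> = (1 + a * b ^ r) * (U * V' ^ r) + (1 + b * a ^ r) * (V * U' ^ r)
        + (1 + a * a ^ r) * (U * U' ^ r) + (1 + b * b ^ r) * (V * V' ^ r)"
      by (simp add: algebra_simps)
    finally show ?thesis using aa bb by simp
  qed
  have "herm_inner r (2 * n) (Phi \<beta>) (Phi \<beta>')
     = (\<Sum>x<n. (Uf \<beta> x + Vf \<beta> x) * (Uf \<beta>' x + Vf \<beta>' x) ^ r
           + (a * Uf \<beta> x + b * Vf \<beta> x) * (a * Uf \<beta>' x + b * Vf \<beta>' x) ^ r)"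
    unfolding Phi_def herm_blk by (simp add: sum.distrib)
  also have "\<dots> = (\<Sum>x<n. (1 + a * b ^ r) * (Uf \<beta> x * Vf \<beta>' x ^ r) + (1 + b * a ^ r) * (Vf \<beta> x * Uf \<beta>' x ^ r))"
    by (simp only: pt)
  also have "\<dots> = (1 + a * b ^ r) * (\<Sum>x<n. Uf \<beta> x * Vf \<beta>' x ^ r) + (1 + b * a ^ r) * (\<Sum>x<n. Vf \<beta> x * Uf \<beta>' x ^ r)"
    by (simp add: sum.distrib sum_distrib_left)
  also have "\<dots> = 0" by (simp add: cross1 cross2)
  finally show ?thesis .
qed

end

context cwsetup
begin

lemma nonroot_count:
  assumes "f \<noteq> 0" "degree f \<le> d"
  shows "card {x. x < n \<and> poly f (P x) \<noteq> 0} \<ge> n - d"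
proof -
  define Z0 where "Z0 = {x. x < n \<and> poly f (P x) = 0}"
  have "card Z0 = card (P ` Z0)"
    by (rule card_image[symmetric]) (rule inj_on_subset[OF injP], auto simp: Z0_def)
  also have "\<dots> \<le> card {y. poly f y = 0}" by (rule card_mono) (auto simp: Z0_def)
  also have "\<dots> \<le> degree f" by (rule card_poly_roots_bound[OF assms(1)])
  finally have c: "card Z0 \<le> d" using assms(2) by simp
  have "{x. x < n \<and> poly f (P x) \<noteq> 0} = {..<n} - Z0" by (auto simp: Z0_def)
  moreover have "card ({..<n} - Z0) = n - card Z0" by (subst card_Diff_subset) (auto simp: Z0_def)
  ultimately show ?thesis using c by simp
qed

lemma weight_Phi:
  assumes "fp \<beta> \<noteq> 0 \<or> gp \<beta> \<noteq> 0"
  shows "hamming_weight (2 * n) (Phi \<beta>) \<ge> min (2 * (n - k + 1)) (n - m2 + 1)"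
proof (cases "gp \<beta> = 0")
  case True
  hence f: "fp \<beta> \<noteq> 0" using assms by simp
  have kd: "k \<ge> 1 \<and> degree (fp \<beta>) \<le> k - 1"
    by (rule degree_lt_of_coeff) (use f in \<open>auto simp: coeff_fp\<close>)
  have V0: "Vf \<beta> x = 0" for x using True by (simp add: Vf_poly cj_0)
  have a0: "a \<noteq> 0" using an r1 by auto
  have hw: "hamming_weight (2 * n) (Phi \<beta>) = 2 * card {x. x < n \<and> poly (fp \<beta>) (P x) \<noteq> 0}"
    unfolding Phi_def weight_blk by (simp add: V0 Uf_poly a0)
  have cc: "card {x. x < n \<and> poly (fp \<beta>) (P x) \<noteq> 0} \<ge> n - (k - 1)"
    by (rule nonroot_count[OF f]) (use kd in simp)
  have e: "n - (k - 1) = n - k + 1" using kd km by simp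
  have "2 * (n - k + 1) \<le> hamming_weight (2 * n) (Phi \<beta>)"
    unfolding hw using cc e by simp
  thus ?thesis by (rule min.coboundedI1)
next
  case False
  have md: "m2 \<ge> 1 \<and> degree (gp \<beta>) \<le> m2 - 1"
    by (rule degree_lt_of_coeff) (use False in \<open>auto simp: coeff_gp\<close>)
  have c1: "card {x. x < n \<and> poly (gp \<beta>) (P x) \<noteq> 0} \<ge> n - (m2 - 1)"
    by (rule nonroot_count[OF False]) (use md in simp)
  have sub: "{x. x < n \<and> poly (gp \<beta>) (P x) \<noteq> 0} \<subseteq>
      {x. x < n \<and> Uf \<beta> x + Vf \<beta> x \<noteq> 0} \<union> {x. x < n \<and> a * Uf \<beta> x + b * Vf \<beta> x \<noteq> 0}"
  proof
    fix x assume x: "x \<in> {x. x < n \<and> poly (gp \<beta>) (P x) \<noteq> 0}"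
    hence V: "Vf \<beta> x \<noteq> 0" using Znz by (simp add: Vf_poly cj_eq0)
    show "x \<in> {x. x < n \<and> Uf \<beta> x + Vf \<beta> x \<noteq> 0} \<union> {x. x < n \<and> a * Uf \<beta> x + b * Vf \<beta> x \<noteq> 0}"
    proof (rule ccontr)
      assume "\<not> ?thesis"
      hence "Uf \<beta> x = - Vf \<beta> x" "a * Uf \<beta> x + b * Vf \<beta> x = 0" using x by (auto simp: add_eq_0_iff)
      hence "(b - a) * Vf \<beta> x = 0" by (simp add: algebra_simps)
      thus False using V ab by simp
    qed
  qed
  have "card {x. x < n \<and> poly (gp \<beta>) (P x) \<noteq> 0} \<le>
      card ({x. x < n \<and> Uf \<beta> x + Vf \<beta> x \<noteq> 0} \<union> {x. x < n \<and> a * Uf \<beta> x + b * Vf \<beta> x \<noteq> 0})"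
    by (rule card_mono[OF _ sub]) simp
  also have "\<dots> \<le> hamming_weight (2 * n) (Phi \<beta>)"
    unfolding Phi_def weight_blk by (rule card_Un_le)
  finally have hh: "card {x. x < n \<and> poly (gp \<beta>) (P x) \<noteq> 0} \<le> hamming_weight (2 * n) (Phi \<beta>)" .
  have e2: "n - (m2 - 1) = n - m2 + 1" using md km by simp
  have "n - m2 + 1 \<le> hamming_weight (2 * n) (Phi \<beta>)" using hh c1 unfolding e2 by simp
  thus ?thesis by (rule min.coboundedI2)
qed

lemma Phi_zero:
  assumes "Phi \<beta> = 0" "j < k + m2"
  shows "\<beta> j = 0"
proof -
  have "\<not> (fp \<beta> \<noteq> 0 \<or> gp \<beta> \<noteq> 0)"
  proof
    assume "fp \<beta> \<noteq> 0 \<or> gp \<beta> \<noteq> 0"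
    hence "hamming_weight (2 * n) (Phi \<beta>) \<ge> min (2 * (n - k + 1)) (n - m2 + 1)" by (rule weight_Phi)
    moreover have "min (2 * (n - k + 1)) (n - m2 + 1) \<ge> 1" by simp
    ultimately show False using assms(1) weight_zero by (metis le_zero_eq not_one_le_zero)
  qed
  hence z: "fp \<beta> = 0" "gp \<beta> = 0" by auto
  show ?thesis
  proof (cases "j < k")
    case True thus ?thesis using z coeff_fp[of \<beta> j] by simp
  next
    case False
    hence "j - k < m2" "k + (j - k) = j" using assms(2) by auto
    thus ?thesis using z coeff_gp[of \<beta> "j - k"] cj_eq0 by simp
  qed
qed

lemma Phi_add: "Phi (\<beta> + \<beta>') = Phi \<beta> + Phi \<beta>'"
proof -
  have U: "Uf (\<lambda>i. \<beta> i + \<beta>' i) x = Uf \<beta> x + Uf \<beta>' x" for x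
    unfolding Uf_def by (simp add: sum.distrib algebra_simps)
  have V: "Vf (\<lambda>i. \<beta> i + \<beta>' i) x = Vf \<beta> x + Vf \<beta>' x" for x
    unfolding Vf_def by (simp add: sum.distrib algebra_simps)
  show ?thesis by (rule ext) (simp add: Phi_def blk_def plus_fun_def U V algebra_simps)
qed

lemma Phi_scale: "Phi (fscale c \<beta>) = fscale c (Phi \<beta>)"
proof -
  have U: "Uf (\<lambda>i. c * \<beta> i) x = c * Uf \<beta> x" for x
    unfolding Uf_def fscale_def by (simp add: sum_distrib_left algebra_simps)
  have V: "Vf (\<lambda>i. c * \<beta> i) x = c * Vf \<beta> x" for x
    unfolding Vf_def fscale_def by (simp add: sum_distrib_left algebra_simps)
  show ?thesis by (rule ext) (simp add: Phi_def blk_def fscale_def U V algebra_simps)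
qed

lemma Phi_0: "Phi 0 = 0"
  using Phi_add[of 0 0] by simp

lemma Phi_sum: "Phi (\<Sum>j\<in>A. fscale (c j) (v j)) = (\<Sum>j\<in>A. fscale (c j) (Phi (v j)))"
proof (induction A rule: infinite_finite_induct)
  case (infinite A) thus ?case by (simp only: sum.infinite[OF infinite] Phi_0)
next
  case empty thus ?case by (simp only: sum.empty Phi_0)
next
  case (insert x F) thus ?case by (simp only: sum.insert[OF insert(1,2)] Phi_add Phi_scale insert(3))
qed

lemma Phi_restrict: "Phi \<beta> = Phi (\<lambda>l. if l < k + m2 then \<beta> l else 0)"
proof -
  have U: "Uf \<beta> = Uf (\<lambda>l. if l < k + m2 then \<beta> l else 0)"
    unfolding Uf_def by (intro ext sum.cong) auto
  have V: "Vf \<beta> = Vf (\<lambda>l. if l < k + m2 then \<beta> l else 0)"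
    unfolding Vf_def by (intro ext sum.cong) auto
  show ?thesis unfolding Phi_def by (simp only: U[symmetric] V[symmetric])
qed

end

context cwsetup
begin

definition W where "W = range Phi"
definition delta :: "nat \<Rightarrow> nat \<Rightarrow> 'a" where "delta j = (\<lambda>l. if l = j then 1 else 0)"

lemma W_vecs: "W \<subseteq> vecs (2 * n)"
  unfolding W_def Phi_def using blk_vecs by auto

lemma W_subspace: "fvs.subspace W"
  unfolding fvs.subspace_def W_def
proof (intro conjI ballI allI)
  show "0 \<in> range Phi" using Phi_0 by (metis rangeI)
next
  fix x y assume "x \<in> range Phi" "y \<in> range Phi"
  then obtain \<beta> \<beta>' where "x = Phi \<beta>" "y = Phi \<beta>'" by auto
  thus "x + y \<in> range Phi" using Phi_add by (metis rangeI)
next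
  fix c x assume "x \<in> range Phi"
  then obtain \<beta> where "x = Phi \<beta>" by auto
  thus "fscale c x \<in> range Phi" using Phi_scale by (metis rangeI)
qed

lemma Phi_zero_if: "fp \<beta> = 0 \<Longrightarrow> gp \<beta> = 0 \<Longrightarrow> Phi \<beta> = 0"
  by (rule ext) (simp add: Phi_def blk_def Uf_poly Vf_poly cj_0)

lemma sum_delta_app: "(\<Sum>j<t. fscale (c j) (delta j)) l = (if l < t then c l else 0)"
  by (simp add: sum_fun_app fscale_def delta_def if_distrib cong: if_cong)

lemma W_dim: "fvs.dim W = k + m2"
proof -
  define t where "t = k + m2"
  define B where "B = (\<lambda>j. Phi (delta j)) ` {..<t}"
  have inj: "inj_on (\<lambda>j. Phi (delta j)) {..<t}"
  proof (rule inj_onI)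
    fix j j' assume j: "j \<in> {..<t}" "j' \<in> {..<t}" and eq: "Phi (delta j) = Phi (delta j')"
    define d where "d = delta j + fscale (-1) (delta j')"
    have "Phi d = Phi (delta j) + fscale (-1) (Phi (delta j'))"
      unfolding d_def by (simp only: Phi_add Phi_scale)
    also have "\<dots> = 0" using eq by (simp add: fscale_def fun_eq_iff)
    finally have "d j = 0" using Phi_zero[of d j] j by (auto simp: t_def)
    hence "(delta j + fscale (-1) (delta j')) j = 0" unfolding d_def .
    thus "j = j'" by (auto simp: delta_def fscale_def split: if_splits)
  qed
  have cardB: "card B = t" unfolding B_def using card_image[OF inj] by simp
  have BW: "B \<subseteq> W" unfolding B_def W_def by auto
  have exp: "Phi \<beta> = (\<Sum>j<t. fscale (\<beta> j) (Phi (delta j)))" for \<beta>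
  proof -
    have "(\<lambda>l. if l < k + m2 then \<beta> l else 0) = (\<Sum>j<t. fscale (\<beta> j) (delta j))"
      by (rule ext) (simp add: sum_delta_app t_def)
    hence "Phi \<beta> = Phi (\<Sum>j<t. fscale (\<beta> j) (delta j))" using Phi_restrict by metis
    thus ?thesis by (simp add: Phi_sum)
  qed
  have WB: "W \<subseteq> fvs.span B"
  proof
    fix v assume "v \<in> W"
    then obtain \<beta> where v: "v = Phi \<beta>" unfolding W_def by auto
    have "fscale (\<beta> j) (Phi (delta j)) \<in> fvs.span B" if "j \<in> {..<t}" for j
    proof (rule fvs.span_scale, rule fvs.span_base)
      show "Phi (delta j) \<in> B" using that unfolding B_def by (rule imageI)
    qed
    hence "(\<Sum>j<t. fscale (\<beta> j) (Phi (delta j))) \<in> fvs.span B" by (rule fvs.span_sum)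
    thus "v \<in> fvs.span B" unfolding v exp[of \<beta>] .
  qed
  have ind: "fvs.independent B"
  proof (rule fvs.independent_if_scalars_zero)
    show "finite B" unfolding B_def by simp
  next
    fix f x assume s: "(\<Sum>x\<in>B. fscale (f x) x) = 0" and x: "x \<in> B"
    then obtain j0 where j0: "j0 < t" "x = Phi (delta j0)" unfolding B_def by auto
    have "(\<Sum>x\<in>B. fscale (f x) x) = (\<Sum>j<t. fscale (f (Phi (delta j))) (Phi (delta j)))"
      unfolding B_def by (subst sum.reindex[OF inj]) simp
    also have "\<dots> = Phi (\<Sum>j<t. fscale (f (Phi (delta j))) (delta j))" by (simp add: Phi_sum)
    finally have "Phi (\<Sum>j<t. fscale (f (Phi (delta j))) (delta j)) = 0" using s by simp
    hence "(\<Sum>j<t. fscale (f (Phi (delta j))) (delta j)) j0 = 0" using j0 by (intro Phi_zero) (auto simp: t_def)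
    thus "f x = 0" using j0 by (simp add: sum_delta_app)
  qed
  show ?thesis using fvs.dim_unique[OF BW WB ind cardB] t_def by simp
qed

lemma W_props:
  "W \<subseteq> vecs (2 * n) \<and> fvs.subspace W \<and> fvs.dim W = k + m2 \<and>
   (\<forall>v\<in>W. v \<noteq> 0 \<longrightarrow> hamming_weight (2 * n) v \<ge> min (2 * (n - k + 1)) (n - m2 + 1)) \<and>
   (\<forall>u\<in>W. \<forall>v\<in>W. herm_inner r (2 * n) u v = 0)"
proof (intro conjI ballI impI)
  fix v assume "v \<in> W" "v \<noteq> 0"
  then obtain \<beta> where v: "v = Phi \<beta>" unfolding W_def by auto
  hence "fp \<beta> \<noteq> 0 \<or> gp \<beta> \<noteq> 0" using Phi_zero_if \<open>v \<noteq> 0\<close> by blast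
  thus "hamming_weight (2 * n) v \<ge> min (2 * (n - k + 1)) (n - m2 + 1)" unfolding v by (rule weight_Phi)
next
  fix u v assume "u \<in> W" "v \<in> W"
  thus "herm_inner r (2 * n) u v = 0" unfolding W_def using herm_Phi by auto
qed (use W_vecs W_subspace W_dim in auto)

end

theorem corollary5p2:
  fixes r n k i :: nat
  assumes "\<exists>p e. prime (p::nat) \<and> e \<ge> 1 \<and> r = p ^ e"
    and "card (UNIV :: 'a set) = r ^ 2"
    and "k \<le> n" and "n \<le> r ^ 2"
    and "i \<le> n - k"
  shows "\<exists>s l m (C :: nat \<Rightarrow> (nat \<Rightarrow> 'a::{finite,field}) set) (A :: nat \<Rightarrow> nat \<Rightarrow> 'a).
           l * m = 2 * n \<and>
           (\<forall>j<s. linear_code m (C j)) \<and>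
           linear_code (2 * n) (mp_code s l m C A) \<and>
           code_dim (mp_code s l m C A) = n - i \<and>
           (\<forall>v\<in>mp_code s l m C A. v \<noteq> 0 \<longrightarrow>
              hamming_weight (2 * n) v \<ge> min (2 * (n - k + 1)) (k + i + 1)) \<and>
           herm_self_orth r (2 * n) (mp_code s l m C A)"
proof -
  obtain p e where pe: "prime p" "e \<ge> 1" "r = p ^ e" using assms(1) by blast
  have card: "card (UNIV::'a set) = r ^ 2" by (rule assms(2))
  have p2: "p \<ge> 2" using pe(1) prime_ge_2_nat by blast
  have r2: "r \<ge> 2"
  proof -
    have "p ^ 1 \<le> p ^ e" using pe p2 by (intro power_increasing) auto
    thus ?thesis using pe p2 by simp
  qed
  have cq: "card (UNIV::'a set) = p ^ (2 * e)" using card pe by (simp add: power_mult mult.commute)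
  have ch: "CHAR('a) = p" by (rule char_eq_p[OF pe(1) cq]) (use pe in simp)
  have radd: "\<forall>x y::'a. (x + y) ^ r = x ^ r + y ^ r"
    using freshmans_dream'[where 'a='a, of r e] ch pe by auto
  have rr: "\<forall>x::'a. (x ^ r) ^ r = x"
  proof
    fix x :: 'a
    have "(x ^ r) ^ r = x ^ (r * r)" by (simp add: power_mult)
    also have "r * r = card (UNIV::'a set)" using card by (simp add: power2_eq_square)
    finally show "(x ^ r) ^ r = x" using fpow_card by simp
  qed
  have m1: "(-1::'a) ^ (r - 1) = 1"
  proof (cases "even r")
    case True
    hence "even p" using pe by simp
    hence "p = 2" using primes_dvd_imp_eq[of 2 p] pe(1) two_is_prime_nat by auto
    hence "-(1::'a) = 1" using uminus_CHAR_2[where 'a='a] ch by blast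
    hence "(-1::'a) ^ (r - 1) = 1 ^ (r - 1)" by (simp only:)
    thus ?thesis by (simp only: power_one)
  next
    case False
    hence "even (r - 1)" using r2 by simp
    thus ?thesis by simp
  qed
  obtain a :: 'a where an: "a ^ (r + 1) = -1" using norm_facts[OF card r2] m1 by blast
  obtain z :: 'a where z: "z \<noteq> 1" "z ^ (r + 1) = 1" using norm_facts[OF card r2] by blast
  define b where "b = a * z"
  have a0: "a \<noteq> 0" using an by (cases "a = 0") auto
  have "b ^ (r + 1) = a ^ (r + 1) * z ^ (r + 1)" unfolding b_def by (rule power_mult_distrib)
  hence bn: "b ^ (r + 1) = -1" using an z(2) by simp
  have ab: "a \<noteq> b" unfolding b_def using a0 z by simp
  obtain N and f :: "nat \<Rightarrow> 'a" where f: "(UNIV::'a set) = f ` {i. i < N}" "inj_on f {i. i < N}"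
    using finite_imp_nat_seg_image_inj_on[of "UNIV::'a set"] by auto
  have NN: "N = card (UNIV::'a set)" using f card_image[OF f(2)] by simp
  have injP: "inj_on f {..<n}"
    by (rule inj_on_subset[OF f(2)]) (use NN card assms(4) in auto)
  define Z where "Z = (\<Prod>y\<in>(UNIV - f ` {..<n}). [:-y, 1:])"
  have polyZ: "poly Z x = (\<Prod>y\<in>(UNIV - f ` {..<n}). x - y)" for x
    unfolding Z_def by (simp add: poly_prod)
  have Znz: "\<forall>x<n. poly Z (f x) \<noteq> 0" unfolding polyZ by auto
  have Zz: "\<forall>y. y \<notin> f ` {..<n} \<longrightarrow> poly Z y = 0" unfolding polyZ by auto
  have "degree Z \<le> (\<Sum>y\<in>(UNIV - f ` {..<n}). degree [:-y, (1::'a):])"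
    unfolding Z_def using degree_prod_sum_le[of "UNIV - f ` {..<n}" "\<lambda>y. [:-y, (1::'a):]"] by (simp add: comp_def)
  also have "\<dots> = card (UNIV - f ` {..<n})" by simp
  also have "\<dots> = card (UNIV::'a set) - n"
    by (subst card_Diff_subset) (auto simp: card_image[OF injP])
  finally have degZ: "degree Z + n \<le> card (UNIV::'a set)" using assms(4) card by linarith
  define m2 where "m2 = n - k - i"
  have km: "k + m2 \<le> n" unfolding m2_def using assms by simp
  interpret cw: cwsetup r n k m2 f Z a b
    by unfold_locales (use injP Znz Zz degZ km radd rr r2 an bn ab in auto)
  have WP: "cw.W \<subseteq> vecs (2 * n) \<and> fvs.subspace cw.W \<and> fvs.dim cw.W = k + m2 \<and>
   (\<forall>v\<in>cw.W. v \<noteq> 0 \<longrightarrow> hamming_weight (2 * n) v \<ge> min (2 * (n - k + 1)) (n - m2 + 1)) \<and>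
   (\<forall>u\<in>cw.W. \<forall>v\<in>cw.W. herm_inner r (2 * n) u v = 0)" by (rule cw.W_props)
  have mp: "mp_code 1 1 (2 * n) (\<lambda>_. cw.W) (\<lambda>_ _. 1) = cw.W"
  proof (intro equalityI subsetI)
    fix w assume "w \<in> mp_code 1 1 (2 * n) (\<lambda>_. cw.W) (\<lambda>_ _. 1)"
    then obtain c :: "nat \<Rightarrow> nat \<Rightarrow> 'a" where c0: "\<forall>i<1. c i \<in> cw.W" and c2: "w = (\<lambda>x. if x < 1 * (2 * n) then (\<Sum>i<1. 1 * c i (x mod (2 * n))) else 0)"
      unfolding mp_code_def by blast
    have c: "c 0 \<in> cw.W" "w = (\<lambda>x. if x < 1 * (2 * n) then (\<Sum>i<1. 1 * c i (x mod (2 * n))) else 0)"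
      using c0 c2 by auto
    have "c 0 \<in> vecs (2 * n)" using c(1) WP by blast
    hence "w = c 0" using c(2) unfolding vecs_def by (auto simp: fun_eq_iff)
    thus "w \<in> cw.W" using c(1) by simp
  next
    fix w assume w: "w \<in> cw.W"
    hence "w \<in> vecs (2 * n)" using WP by blast
    hence eqw: "w = (\<lambda>x. if x < 1 * (2 * n) then (\<Sum>i\<in>{..<(1::nat)}. 1 * (\<lambda>_. w) i (x mod (2 * n))) else 0)"
      unfolding vecs_def by (auto simp: fun_eq_iff)
    show "w \<in> mp_code 1 1 (2 * n) (\<lambda>_. cw.W) (\<lambda>_ _. 1)"
      unfolding mp_code_def mem_Collect_eq
    proof (intro exI[of _ "\<lambda>_::nat. w"] conjI)
      show "\<forall>i<1. (\<lambda>_::nat. w) i \<in> cw.W" using w by simp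
      show "w = (\<lambda>x. if x < 1 * (2 * n) then (\<Sum>i\<in>{..<(1::nat)}. 1 * (\<lambda>_. w) i (x mod (2 * n))) else 0)"
        by (rule eqw)
    qed
  qed
  have e1: "k + m2 = n - i" unfolding m2_def using assms by simp
  have e2: "n - m2 + 1 = k + i + 1" unfolding m2_def using assms by simp
  have lc: "linear_code (2 * n) cw.W" unfolding linear_code_def using WP by simp
  show ?thesis
  proof (intro exI conjI)
    show "1 * (2 * n) = 2 * n" by simp
    show "\<forall>j<1. linear_code (2 * n) ((\<lambda>_. cw.W) j)" using lc by simp
    show "linear_code (2 * n) (mp_code 1 1 (2 * n) (\<lambda>_. cw.W) (\<lambda>_ _. 1))" using lc mp by simp
    show "code_dim (mp_code 1 1 (2 * n) (\<lambda>_. cw.W) (\<lambda>_ _. 1)) = n - i"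
      unfolding mp code_dim_def using WP e1 by simp
    show "\<forall>v\<in>mp_code 1 1 (2 * n) (\<lambda>_. cw.W) (\<lambda>_ _. 1). v \<noteq> 0 \<longrightarrow>
              hamming_weight (2 * n) v \<ge> min (2 * (n - k + 1)) (k + i + 1)"
      unfolding mp using WP e2 by simp
    show "herm_self_orth r (2 * n) (mp_code 1 1 (2 * n) (\<lambda>_. cw.W) (\<lambda>_ _. 1))"
      unfolding mp herm_self_orth_def using WP by simp
  qed
qed


end
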